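(* Let $G=(K\cup I,E)$ be a split graph and $(V,\mathcal{F})$ the split graph vertex shelling antimatroid defined on $G$. Let $i\in I$. Then every $i$-feasible set $F$ satisfies $\operatorname{fos}(i)\subseteq F$.
   Context: A split graph $G=(K\cup I,E)$ is a finite simple graph whose vertex set $V=K\cup I$ comes with a fixed partition into a clique $K$ and an independent set $I$. We write $u\sim v$ for adjacency, and for $F\subseteq V$, $N(F)$ is the set of vertices of $V\setminus F$ adjacent to some vertex of $F$; $N(v)=N(\{v\})$. A vertex is simplicial if its neighbours induce a clique. The split graph vertex shelling antimatroid of $G$ is $(V,\mathcal{F})$ where $F\subseteq V$ is feasible iff there is an ordering $f_1,\dots,f_{|F|}$ of $F$ such that each $f_j$ is simplicial in $G$ minus $\{f_1,\dots,f_{j-1}\}$ (the empty set is feasible). For $i\in I$, a feasible set $F$ is $i$-feasible if $i\in N(F)$. The forced set of $i\in I$ is $\operatorname{fos}(i)=\{k\in K: k\not\sim i\}\cup\{i'\in I: N(i')\not\subseteq N(i)\}$. *)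

theory Defs
  imports Main
begin

definition split_graph :: "'a set \<Rightarrow> 'a set \<Rightarrow> ('a \<Rightarrow> 'a \<Rightarrow> bool) \<Rightarrow> bool" where
  "split_graph K I adj \<longleftrightarrow>
     finite (K \<union> I) \<and> K \<inter> I = {} \<and>
     (\<forall>u v. adj u v \<longrightarrow> u \<in> K \<union> I \<and> v \<in> K \<union> I) \<and>
     (\<forall>u v. adj u v \<longrightarrow> adj v u) \<and>
     (\<forall>v. \<not> adj v v) \<and>
     (\<forall>u\<in>K. \<forall>v\<in>K. u \<noteq> v \<longrightarrow> adj u v) \<and>
     (\<forall>u\<in>I. \<forall>v\<in>I. \<not> adj u v)"

definition nbhd :: "'a set \<Rightarrow> ('a \<Rightarrow> 'a \<Rightarrow> bool) \<Rightarrow> 'a set \<Rightarrow> 'a set" where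
  "nbhd V adj F = {v \<in> V - F. \<exists>f\<in>F. adj f v}"

definition simplicial_in :: "'a set \<Rightarrow> ('a \<Rightarrow> 'a \<Rightarrow> bool) \<Rightarrow> 'a \<Rightarrow> bool" where
  "simplicial_in W adj v \<longleftrightarrow> v \<in> W \<and>
     (\<forall>x\<in>W. \<forall>y\<in>W. adj v x \<and> adj v y \<and> x \<noteq> y \<longrightarrow> adj x y)"

definition shelling_feasible :: "'a set \<Rightarrow> 'a set \<Rightarrow> ('a \<Rightarrow> 'a \<Rightarrow> bool) \<Rightarrow> 'a set \<Rightarrow> bool" where
  "shelling_feasible K I adj F \<longleftrightarrow>
     (\<exists>xs. distinct xs \<and> set xs = F \<and>
        (\<forall>j < length xs. simplicial_in ((K \<union> I) - set (take j xs)) adj (xs ! j)))"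

definition i_feasible :: "'a set \<Rightarrow> 'a set \<Rightarrow> ('a \<Rightarrow> 'a \<Rightarrow> bool) \<Rightarrow> 'a \<Rightarrow> 'a set \<Rightarrow> bool" where
  "i_feasible K I adj i F \<longleftrightarrow> shelling_feasible K I adj F \<and> i \<in> nbhd (K \<union> I) adj F"

definition fos :: "'a set \<Rightarrow> 'a set \<Rightarrow> ('a \<Rightarrow> 'a \<Rightarrow> bool) \<Rightarrow> 'a \<Rightarrow> 'a set" where
  "fos K I adj i = {k \<in> K. \<not> adj k i} \<union>
     {i' \<in> I. \<not> (nbhd (K \<union> I) adj {i'} \<subseteq> nbhd (K \<union> I) adj {i})}"

end

theory Submission
  imports Defs
begin

lemma take_mem_nth:
  assumes "distinct xs" "a < length xs" "b < length xs" "xs ! b \<in> set (take a xs)"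
  shows "b < a"
proof -
  from assms(4) obtain m where m: "m < length (take a xs)" "take a xs ! m = xs ! b"
    by (auto simp: in_set_conv_nth)
  hence "m < a" "xs ! m = xs ! b" by auto
  with assms(1,3) m show ?thesis by (simp add: nth_eq_iff_index_eq)
qed

theorem mainTheorem7:
  fixes K I :: "'a set" and adj :: "'a \<Rightarrow> 'a \<Rightarrow> bool" and i :: 'a and F :: "'a set"
  assumes "split_graph K I adj"
    and "i \<in> I"
    and "i_feasible K I adj i F"
  shows "fos K I adj i \<subseteq> F"
proof -
  let ?V = "K \<union> I"
  have sg: "K \<inter> I = {}" "\<And>u v. adj u v \<Longrightarrow> u \<in> ?V \<and> v \<in> ?V"
    "\<And>u v. adj u v \<Longrightarrow> adj v u" "\<And>v. \<not> adj v v"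
    "\<And>u v. u \<in> K \<Longrightarrow> v \<in> K \<Longrightarrow> u \<noteq> v \<Longrightarrow> adj u v"
    "\<And>u v. u \<in> I \<Longrightarrow> v \<in> I \<Longrightarrow> \<not> adj u v"
    using assms(1) unfolding split_graph_def by blast+
  from assms(3) obtain xs where xs: "distinct xs" "set xs = F"
    "\<And>j. j < length xs \<Longrightarrow> simplicial_in (?V - set (take j xs)) adj (xs ! j)"
    and iN: "i \<in> nbhd ?V adj F"
    unfolding i_feasible_def shelling_feasible_def by blast
  have L: "adj y z" if "j < length xs" "y \<in> ?V" "z \<in> ?V" "y \<notin> set (take j xs)"
    "z \<notin> set (take j xs)" "adj (xs ! j) y" "adj (xs ! j) z" "y \<noteq> z" for j y z
    using xs(3)[OF that(1)] that unfolding simplicial_in_def by blast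
  have notake: "y \<notin> set (take j xs)" if "y \<notin> F" for y j
    using that xs(2) by (meson in_set_takeD)
  from iN have iF: "i \<notin> F" and "\<exists>f\<in>F. adj f i" unfolding nbhd_def by auto
  then obtain jf where jf: "jf < length xs" "adj (xs ! jf) i"
    using xs(2) by (auto simp: in_set_conv_nth)
  define f where "f = xs ! jf"
  have fF: "f \<in> F" using jf xs(2) f_def by auto
  have fK: "f \<in> K" using jf sg assms(2) f_def by blast
  have iV: "i \<in> ?V" using assms(2) by auto
  have part1: "k \<in> F" if "k \<in> K" "\<not> adj k i" for k
  proof (rule ccontr)
    assume "k \<notin> F"
    have "k \<noteq> f" using \<open>k \<notin> F\<close> fF by auto
    hence "adj f k" using sg(5) fK that by auto
    moreover have "k \<noteq> i" using that assms(2) sg(1) by auto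
    ultimately have "adj k i" using L[OF jf(1), of k i] notake[OF \<open>k \<notin> F\<close>] notake[OF iF]
      that iV jf f_def by auto
    with that show False by simp
  qed
  show ?thesis
  proof
    fix x assume "x \<in> fos K I adj i"
    then consider "x \<in> K" "\<not> adj x i"
      | "x \<in> I" "\<not> (nbhd ?V adj {x} \<subseteq> nbhd ?V adj {i})"
      unfolding fos_def by blast
    then show "x \<in> F"
    proof cases
      case 1 then show ?thesis using part1 by blast
    next
      case 2
      then obtain v where v: "v \<in> ?V" "v \<noteq> x" "adj x v" "\<not> (v \<in> ?V - {i} \<and> adj i v)"
        unfolding nbhd_def by blast
      have vK: "v \<in> K" using v 2 sg by blast
      have vi: "v \<noteq> i" using vK assms(2) sg(1) by auto
      have nvi: "\<not> adj v i" using v vi sg(3) by blast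
      have vF: "v \<in> F" using part1 vK nvi by blast
      then obtain jv where jv: "jv < length xs" "xs ! jv = v"
        using xs(2) by (auto simp: in_set_conv_nth)
      have xi: "x \<noteq> i" using v vi by blast
      show "x \<in> F"
      proof (rule ccontr)
        assume xF: "x \<notin> F"
        have xV: "x \<in> ?V" using 2 by auto
        show False
        proof (cases "jf \<le> jv")
          case True
          have "v \<noteq> f" using nvi jf f_def sg(3) by blast
          hence "jf \<noteq> jv" using jv f_def by auto
          hence "v \<notin> set (take jf xs)" using take_mem_nth[OF xs(1) jf(1) jv(1)] jv True by auto
          moreover have "adj f v" using sg(5) fK vK \<open>v \<noteq> f\<close> by auto
          ultimately have "adj v i" using L[OF jf(1), of v i] notake[OF iF] v iV jf f_def vi by auto
          with nvi show False by simp
        next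
          case False
          have "f \<notin> set (take jv xs)"
            using take_mem_nth[OF xs(1) jv(1) jf(1)] False f_def by auto
          moreover have "adj v f" using sg(5) fK vK nvi jf f_def by blast
          moreover have "adj v x" using v sg(3) by blast
          moreover have "f \<noteq> x" using fK 2 sg(1) by auto
          moreover have "f \<in> ?V" using fK by auto
          ultimately have "adj f x" using L[OF jv(1), of f x] notake[OF xF] xV jv by auto
          hence "adj i x" using L[OF jf(1), of i x] notake[OF xF] notake[OF iF] xV iV jf f_def xi
            by auto
          with sg(6) assms(2) 2 show False by blast
        qed
      qed
    qed
  qed
qed

end
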